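(* Let $h,n\geq2$ and let $U,V\leq G$ be such that $\langle U,V\rangle$ is regular. (i) If $p^U\subseteq p^V$ for every $p\in\mathcal{P}$, then $\mathcal{F}^V\subseteq\mathcal{F}^U$. (ii) If $p^U=p^V$ for every $p\in\mathcal{P}$, then $\mathcal{F}^V=\mathcal{F}^U$.
   Context: Permutations compose as $(\sigma\tau)(x)=\sigma(\tau(x))$. Let $G=S_h\times S_n$ and $\mathcal{P}=(S_n)^h$ (preference profiles), with $G$ acting by $(p^{(\varphi,\psi)})_i=\psi\,p_{\varphi^{-1}(i)}$; for $U\leq G$, $p^U=\{p^g:g\in U\}$. $U\leq G$ is regular if for every $p\in\mathcal{P}$, $\{g\in U:p^g=p\}\subseteq S_h\times\{id\}$. A social preference function is any $F:\mathcal{P}\to S_n$; $\mathcal{F}^U$ denotes the set of $U$-symmetric ones, i.e. those with $F(p^{(\varphi,\psi)})=\psi F(p)$ for all $p\in\mathcal{P}$, $(\varphi,\psi)\in U$. *)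

theory Defs
  imports "HOL-Algebra.Algebra" "HOL-Combinatorics.Permutations"
begin

text \<open>Permutations of {1..k} are modelled as permutations of {0..<k}, i.e. functions
  nat \<Rightarrow> nat that permute {..<k} (identity outside). Composition is function composition.\<close>

definition Sym :: "nat \<Rightarrow> (nat \<Rightarrow> nat) set" where
  "Sym k = {\<sigma>. \<sigma> permutes {..<k}}"

definition Ggrp :: "nat \<Rightarrow> nat \<Rightarrow> ((nat \<Rightarrow> nat) \<times> (nat \<Rightarrow> nat)) monoid" where
  "Ggrp h n = \<lparr> carrier = Sym h \<times> Sym n,
                monoid.mult = (\<lambda>(\<phi>1, \<psi>1) (\<phi>2, \<psi>2). (\<phi>1 \<circ> \<phi>2, \<psi>1 \<circ> \<psi>2)),
                one = (id, id) \<rparr>"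

text \<open>Preference profiles (S_n)^h: voter i < h gets p i; extended by id outside.\<close>
definition profiles :: "nat \<Rightarrow> nat \<Rightarrow> (nat \<Rightarrow> nat \<Rightarrow> nat) set" where
  "profiles h n = {p. (\<forall>i<h. p i \<in> Sym n) \<and> (\<forall>i\<ge>h. p i = id)}"

definition act :: "nat \<Rightarrow> (nat \<Rightarrow> nat) \<times> (nat \<Rightarrow> nat) \<Rightarrow> (nat \<Rightarrow> nat \<Rightarrow> nat) \<Rightarrow> (nat \<Rightarrow> nat \<Rightarrow> nat)" where
  "act h g p = (\<lambda>i. if i < h then snd g \<circ> p (Hilbert_Choice.inv (fst g) i) else id)"

definition orbit_under :: "nat \<Rightarrow> ((nat \<Rightarrow> nat) \<times> (nat \<Rightarrow> nat)) set \<Rightarrow> (nat \<Rightarrow> nat \<Rightarrow> nat) \<Rightarrow> (nat \<Rightarrow> nat \<Rightarrow> nat) set" where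
  "orbit_under h U p = (\<lambda>g. act h g p) ` U"

definition regular :: "nat \<Rightarrow> nat \<Rightarrow> ((nat \<Rightarrow> nat) \<times> (nat \<Rightarrow> nat)) set \<Rightarrow> bool" where
  "regular h n U \<longleftrightarrow> (\<forall>p\<in>profiles h n. {g\<in>U. act h g p = p} \<subseteq> Sym h \<times> {id})"

text \<open>U-symmetric social preference functions F : P -> S_n (values outside P irrelevant,
  so we take F extensional on P).\<close>
definition symF :: "nat \<Rightarrow> nat \<Rightarrow> ((nat \<Rightarrow> nat) \<times> (nat \<Rightarrow> nat)) set \<Rightarrow> ((nat \<Rightarrow> nat \<Rightarrow> nat) \<Rightarrow> (nat \<Rightarrow> nat)) set" where
  "symF h n U = {F. F \<in> extensional (profiles h n) \<and> (\<forall>p\<in>profiles h n. F p \<in> Sym n) \<and>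
      (\<forall>p\<in>profiles h n. \<forall>g\<in>U. F (act h g p) = snd g \<circ> F p)}"

end

theory Submission
  imports Defs
begin

lemma Sym_bij: "\<sigma> \<in> Sym k \<Longrightarrow> bij \<sigma>"
  unfolding Sym_def using permutes_bij by blast

lemma Ggrp_group: "group (Ggrp h n)"
proof (rule groupI)
  fix x y assume "x \<in> carrier (Ggrp h n)" "y \<in> carrier (Ggrp h n)"
  then show "x \<otimes>\<^bsub>Ggrp h n\<^esub> y \<in> carrier (Ggrp h n)"
    by (auto simp: Ggrp_def Sym_def permutes_compose split: prod.splits)
next
  show "\<one>\<^bsub>Ggrp h n\<^esub> \<in> carrier (Ggrp h n)"
    by (auto simp: Ggrp_def Sym_def permutes_id)
next
  fix x y z assume "x \<in> carrier (Ggrp h n)" "y \<in> carrier (Ggrp h n)" "z \<in> carrier (Ggrp h n)"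
  then show "x \<otimes>\<^bsub>Ggrp h n\<^esub> y \<otimes>\<^bsub>Ggrp h n\<^esub> z =
           x \<otimes>\<^bsub>Ggrp h n\<^esub> (y \<otimes>\<^bsub>Ggrp h n\<^esub> z)"
    by (auto simp: Ggrp_def o_assoc split: prod.splits)
next
  fix x assume "x \<in> carrier (Ggrp h n)"
  then show "\<one>\<^bsub>Ggrp h n\<^esub> \<otimes>\<^bsub>Ggrp h n\<^esub> x = x"
    by (auto simp: Ggrp_def split: prod.splits)
next
  fix x assume "x \<in> carrier (Ggrp h n)"
  then obtain a b where x: "x = (a, b)" "a permutes {..<h}" "b permutes {..<n}"
    by (auto simp: Ggrp_def Sym_def)
  show "\<exists>y\<in>carrier (Ggrp h n). y \<otimes>\<^bsub>Ggrp h n\<^esub> x = \<one>\<^bsub>Ggrp h n\<^esub>"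
    apply (rule bexI[of _ "(Hilbert_Choice.inv a, Hilbert_Choice.inv b)"])
    using x by (auto simp: Ggrp_def Sym_def permutes_inv permutes_inv_o)
qed

lemma Ggrp_inv:
  assumes "(a, b) \<in> carrier (Ggrp h n)"
  shows "inv\<^bsub>Ggrp h n\<^esub> (a, b) = (Hilbert_Choice.inv a, Hilbert_Choice.inv b)"
proof -
  from assms have x: "a permutes {..<h}" "b permutes {..<n}"
    by (auto simp: Ggrp_def Sym_def)
  show ?thesis
    apply (rule group.inv_equality[OF Ggrp_group])
    using x assms by (auto simp: Ggrp_def Sym_def permutes_inv permutes_inv_o)
qed

lemma act_mult:
  assumes "g1 \<in> carrier (Ggrp h n)" "g2 \<in> carrier (Ggrp h n)"
  shows "act h (g1 \<otimes>\<^bsub>Ggrp h n\<^esub> g2) p = act h g1 (act h g2 p)"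
proof -
  obtain a b where g1: "g1 = (a, b)" "a permutes {..<h}" "b permutes {..<n}"
    using assms by (auto simp: Ggrp_def Sym_def)
  obtain c d where g2: "g2 = (c, d)" "c permutes {..<h}" "d permutes {..<n}"
    using assms by (auto simp: Ggrp_def Sym_def)
  have "Hilbert_Choice.inv (a \<circ> c) = Hilbert_Choice.inv c \<circ> Hilbert_Choice.inv a"
    using g1 g2 by (simp add: o_inv_distrib permutes_bij)
  moreover have "\<And>i. i < h \<Longrightarrow> Hilbert_Choice.inv a i < h"
    using permutes_in_image[OF permutes_inv[OF g1(2)]] by auto
  ultimately show ?thesis
    using g1 g2 by (auto simp: act_def Ggrp_def fun_eq_iff)
qed

lemma act_one: "p \<in> profiles h n \<Longrightarrow> act h \<one>\<^bsub>Ggrp h n\<^esub> p = p"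
  by (auto simp: act_def Ggrp_def profiles_def fun_eq_iff)

lemma key:
  assumes U: "subgroup U (Ggrp h n)" and V: "subgroup V (Ggrp h n)"
    and reg: "regular h n (generate (Ggrp h n) (U \<union> V))"
    and p: "p \<in> profiles h n" and u: "u \<in> U" and v: "v \<in> V"
    and eq: "act h u p = act h v p"
  shows "snd u = snd v"
proof -
  let ?G = "Ggrp h n"
  interpret group ?G by (rule Ggrp_group)
  have uc: "u \<in> carrier ?G" using U u subgroup.subset by blast
  have vc: "v \<in> carrier ?G" using V v subgroup.subset by blast
  have ivc: "inv\<^bsub>?G\<^esub> v \<in> carrier ?G" using vc by simp
  have gen: "inv\<^bsub>?G\<^esub> v \<otimes>\<^bsub>?G\<^esub> u \<in> generate ?G (U \<union> V)"
    using v u by (intro generate.eng generate.inv generate.incl) auto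
  have "act h (inv\<^bsub>?G\<^esub> v \<otimes>\<^bsub>?G\<^esub> u) p = act h (inv\<^bsub>?G\<^esub> v) (act h v p)"
    using act_mult[OF ivc uc] eq by simp
  also have "\<dots> = act h (inv\<^bsub>?G\<^esub> v \<otimes>\<^bsub>?G\<^esub> v) p"
    using act_mult[OF ivc vc] by simp
  also have "\<dots> = p" using vc act_one[OF p] by simp
  finally have "snd (inv\<^bsub>?G\<^esub> v \<otimes>\<^bsub>?G\<^esub> u) = id"
  proof -
    assume a: "act h (inv\<^bsub>?G\<^esub> v \<otimes>\<^bsub>?G\<^esub> u) p = p"
    have "inv\<^bsub>?G\<^esub> v \<otimes>\<^bsub>?G\<^esub> u \<in> Sym h \<times> {id}"
      using reg p gen a unfolding regular_def by blast
    then show ?thesis by auto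
  qed
  moreover obtain a b where vv: "v = (a, b)" "b permutes {..<n}"
    using vc by (auto simp: Ggrp_def Sym_def)
  moreover obtain c d where uu: "u = (c, d)" using prod.exhaust by blast
  ultimately have "Hilbert_Choice.inv b \<circ> d = id"
    using vc Ggrp_inv[of a b h n] by (simp add: Ggrp_def)
  then have "b \<circ> (Hilbert_Choice.inv b \<circ> d) = b" by simp
  then have "d = b" using permutes_inv_o(1)[OF vv(2)] by (metis o_assoc id_o)
  then show ?thesis using vv uu by simp
qed

lemma part1:
  assumes U: "subgroup U (Ggrp h n)" and V: "subgroup V (Ggrp h n)"
    and reg: "regular h n (generate (Ggrp h n) (U \<union> V))"
    and orb: "\<forall>p\<in>profiles h n. orbit_under h U p \<subseteq> orbit_under h V p"
  shows "symF h n V \<subseteq> symF h n U"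
proof
  fix F assume F: "F \<in> symF h n V"
  have "F (act h u p) = snd u \<circ> F p" if p: "p \<in> profiles h n" and u: "u \<in> U" for p u
  proof -
    have "act h u p \<in> orbit_under h V p"
      using orb p u unfolding orbit_under_def by blast
    then obtain v where v: "v \<in> V" "act h u p = act h v p"
      unfolding orbit_under_def by blast
    have "snd u = snd v" using key[OF U V reg p u v] by simp
    then show ?thesis using F v p unfolding symF_def by auto
  qed
  then show "F \<in> symF h n U" using F unfolding symF_def by auto
qed

theorem mainTheorem14:
  fixes h n :: nat and U V :: "((nat \<Rightarrow> nat) \<times> (nat \<Rightarrow> nat)) set"
  assumes "h \<ge> 2" and "n \<ge> 2"
    and "subgroup U (Ggrp h n)" and "subgroup V (Ggrp h n)"
    and "regular h n (generate (Ggrp h n) (U \<union> V))"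
  shows "((\<forall>p\<in>profiles h n. orbit_under h U p \<subseteq> orbit_under h V p) \<longrightarrow> symF h n V \<subseteq> symF h n U)
       \<and> ((\<forall>p\<in>profiles h n. orbit_under h U p = orbit_under h V p) \<longrightarrow> symF h n V = symF h n U)"
proof -
  have r2: "regular h n (generate (Ggrp h n) (V \<union> U))"
    using assms(5) by (simp add: Un_commute)
  show ?thesis
    using part1[OF assms(3,4,5)] part1[OF assms(4,3) r2] by (metis order_refl subset_antisym)
qed

end
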